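(* Let $A,B,B'$ be clusterings of $\{1,\dots,n\}$. Then $B'$ is an $A$-consistent improvement of $B$ if and only if $B'\neq B$ and $B'$ can be obtained from $B$ by a finite sequence of perfect splits and perfect merges (each taken with respect to $A$).
   Context: A clustering of $\{1,\dots,n\}$ is a partition into nonempty disjoint clusters. A pair of distinct elements is an intra-cluster pair of a clustering if both lie in the same cluster, and an inter-cluster pair otherwise. A pair agrees in clusterings $A$ and $B$ if it is intra-cluster in both or inter-cluster in both. $B'$ is an $A$-consistent improvement of $B$ if $B\neq B'$ and every pair of elements that agrees in $A$ and $B$ also agrees in $A$ and $B'$. $B'$ is a perfect split of $B$ (w.r.t. $A$) if $B'$ is obtained from $B$ by splitting one cluster $B_1$ into two nonempty clusters $B_1',B_2'$ such that for every cluster $A_i$ of $A$, $A_i\cap B_1$ is contained in $B_1'$ or in $B_2'$. $B'$ is a perfect merge of $B$ (w.r.t. $A$) if there is a cluster $A_i$ of $A$ and two distinct clusters $B_1,B_2\subseteq A_i$ of $B$ such that $B'$ is obtained from $B$ by merging $B_1$ and $B_2$ into one cluster. *)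

theory Defs
  imports Main
begin

definition is_clustering :: "nat \<Rightarrow> nat set set \<Rightarrow> bool" where
  "is_clustering n C \<longleftrightarrow>
     \<Union>C = {1..n} \<and> {} \<notin> C \<and> (\<forall>c\<in>C. \<forall>d\<in>C. c \<noteq> d \<longrightarrow> c \<inter> d = {})"

definition intra :: "nat set set \<Rightarrow> nat \<Rightarrow> nat \<Rightarrow> bool" where
  "intra C x y \<longleftrightarrow> (\<exists>c\<in>C. x \<in> c \<and> y \<in> c)"

definition agrees :: "nat set set \<Rightarrow> nat set set \<Rightarrow> nat \<Rightarrow> nat \<Rightarrow> bool" where
  "agrees A B x y \<longleftrightarrow> (intra A x y \<longleftrightarrow> intra B x y)"

definition consistent_improvement ::
  "nat \<Rightarrow> nat set set \<Rightarrow> nat set set \<Rightarrow> nat set set \<Rightarrow> bool" where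
  "consistent_improvement n A B B' \<longleftrightarrow>
     B \<noteq> B' \<and>
     (\<forall>x\<in>{1..n}. \<forall>y\<in>{1..n}. x \<noteq> y \<longrightarrow> agrees A B x y \<longrightarrow> agrees A B' x y)"

definition perfect_split :: "nat set set \<Rightarrow> nat set set \<Rightarrow> nat set set \<Rightarrow> bool" where
  "perfect_split A B B' \<longleftrightarrow>
     (\<exists>B1 B1' B2'. B1 \<in> B \<and> B1' \<noteq> {} \<and> B2' \<noteq> {} \<and> B1' \<inter> B2' = {} \<and>
        B1' \<union> B2' = B1 \<and> B' = (B - {B1}) \<union> {B1', B2'} \<and>
        (\<forall>Ai\<in>A. Ai \<inter> B1 \<subseteq> B1' \<or> Ai \<inter> B1 \<subseteq> B2'))"

definition perfect_merge :: "nat set set \<Rightarrow> nat set set \<Rightarrow> nat set set \<Rightarrow> bool" where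
  "perfect_merge A B B' \<longleftrightarrow>
     (\<exists>Ai\<in>A. \<exists>B1\<in>B. \<exists>B2\<in>B. B1 \<noteq> B2 \<and> B1 \<subseteq> Ai \<and> B2 \<subseteq> Ai \<and>
        B' = (B - {B1, B2}) \<union> {B1 \<union> B2})"

definition perfect_step :: "nat set set \<Rightarrow> nat set set \<Rightarrow> nat set set \<Rightarrow> bool" where
  "perfect_step A B B' \<longleftrightarrow> perfect_split A B B' \<or> perfect_merge A B B'"

end

theory Submission
  imports Defs
begin

definition cons_rel :: "nat \<Rightarrow> nat set set \<Rightarrow> nat set set \<Rightarrow> nat set set \<Rightarrow> bool" where
  "cons_rel n A X Y \<longleftrightarrow> (\<forall>x\<in>{1..n}. \<forall>y\<in>{1..n}. x \<noteq> y \<longrightarrow> agrees A X x y \<longrightarrow> agrees A Y x y)"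

definition diffset :: "nat \<Rightarrow> nat set set \<Rightarrow> nat set set \<Rightarrow> (nat \<times> nat) set" where
  "diffset n X Y = {(u,v). u \<in> {1..n} \<and> v \<in> {1..n} \<and> u \<noteq> v \<and> intra X u v \<noteq> intra Y u v}"

lemma cluster_unique:
  assumes "is_clustering n C" "c \<in> C" "d \<in> C" "x \<in> c" "x \<in> d" shows "c = d"
proof (rule ccontr)
  assume "c \<noteq> d"
  then have "c \<inter> d = {}" using assms(1,2,3) unfolding is_clustering_def by blast
  then show False using assms(4,5) by blast
qed

lemma in_cluster: "is_clustering n C \<Longrightarrow> x \<in> {1..n} \<Longrightarrow> \<exists>c\<in>C. x \<in> c"
  unfolding is_clustering_def by blast

lemma cluster_sub: "is_clustering n C \<Longrightarrow> c \<in> C \<Longrightarrow> c \<subseteq> {1..n}"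
  unfolding is_clustering_def by blast

lemma intra_trans: "is_clustering n C \<Longrightarrow> intra C u v \<Longrightarrow> intra C v w \<Longrightarrow> intra C u w"
  unfolding intra_def by (metis cluster_unique)

lemma step_cons:
  assumes "perfect_step A X Y" shows "cons_rel n A X Y"
  using assms unfolding perfect_step_def
proof
  assume "perfect_split A X Y"
  then obtain B1 B1' B2' where h: "B1 \<in> X" "B1' \<noteq> {}" "B2' \<noteq> {}" "B1' \<inter> B2' = {}"
    "B1' \<union> B2' = B1" "Y = (X - {B1}) \<union> {B1', B2'}"
    "\<forall>Ai\<in>A. Ai \<inter> B1 \<subseteq> B1' \<or> Ai \<inter> B1 \<subseteq> B2'"
    unfolding perfect_split_def by blast
  show ?thesis unfolding cons_rel_def
  proof (intro ballI impI)
    fix x y assume xy: "x \<noteq> y" and ag: "agrees A X x y"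
    have 1: "intra X x y" if Yxy: "intra Y x y"
    proof -
      obtain c where c: "c \<in> Y" "x \<in> c" "y \<in> c" using Yxy unfolding intra_def by blast
      have "c \<in> X \<or> c = B1' \<or> c = B2'" using c(1) h(6) by auto
      then have "c \<in> X \<or> c \<subseteq> B1" using h(5) by auto
      then show ?thesis using c h(1) unfolding intra_def by blast
    qed
    have 2: "intra X x y \<Longrightarrow> intra A x y \<Longrightarrow> intra Y x y"
    proof -
      assume "intra X x y" "intra A x y"
      then obtain c Ai where c: "c \<in> X" "x \<in> c" "y \<in> c" "Ai \<in> A" "x \<in> Ai" "y \<in> Ai"
        unfolding intra_def by blast
      show "intra Y x y"
      proof (cases "c = B1")
        case True
        then have "x \<in> Ai \<inter> B1" "y \<in> Ai \<inter> B1" using c by auto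
        have "B1' \<in> Y" "B2' \<in> Y" using h(6) by auto
        moreover have "Ai \<inter> B1 \<subseteq> B1' \<or> Ai \<inter> B1 \<subseteq> B2'" using h(7) c(4) by blast
        ultimately show ?thesis using \<open>x \<in> Ai \<inter> B1\<close> \<open>y \<in> Ai \<inter> B1\<close> unfolding intra_def by blast
      next
        case False then have "c \<in> Y" using h(6) c by auto
        then show ?thesis using c unfolding intra_def by blast
      qed
    qed
    show "agrees A Y x y" using ag 1 2 unfolding agrees_def by blast
  qed
next
  assume "perfect_merge A X Y"
  then obtain Ai B1 B2 where h: "Ai \<in> A" "B1 \<in> X" "B2 \<in> X" "B1 \<subseteq> Ai" "B2 \<subseteq> Ai"
    "Y = (X - {B1, B2}) \<union> {B1 \<union> B2}"
    unfolding perfect_merge_def by blast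
  show ?thesis unfolding cons_rel_def
  proof (intro ballI impI)
    fix x y assume xy: "x \<noteq> y" and ag: "agrees A X x y"
    have 1: "intra X x y \<or> intra A x y" if Yxy: "intra Y x y"
    proof -
      obtain c where c: "c \<in> Y" "x \<in> c" "y \<in> c" using Yxy unfolding intra_def by blast
      have "c \<in> X \<or> c = B1 \<union> B2" using c(1) h(6) by auto
      then have "c \<in> X \<or> c \<subseteq> Ai" using h(4,5) by auto
      then show ?thesis using c h(1) unfolding intra_def by blast
    qed
    have 2: "intra Y x y" if Xxy: "intra X x y"
    proof -
      obtain c where c: "c \<in> X" "x \<in> c" "y \<in> c" using Xxy unfolding intra_def by blast
      show ?thesis
      proof (cases "c = B1 \<or> c = B2")
        case True
        then have "x \<in> B1 \<union> B2" "y \<in> B1 \<union> B2" using c by auto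
        moreover have "B1 \<union> B2 \<in> Y" using h(6) by simp
        ultimately show ?thesis unfolding intra_def by (intro bexI[of _ "B1 \<union> B2"]) simp_all
      next
        case False then have "c \<in> Y" using h(6) c by auto
        then show ?thesis using c unfolding intra_def by blast
      qed
    qed
    show "agrees A Y x y" using ag 1 2 unfolding agrees_def by blast
  qed
qed

lemma cons_trans: "cons_rel n A X Y \<Longrightarrow> cons_rel n A Y Z \<Longrightarrow> cons_rel n A X Z"
  unfolding cons_rel_def by blast

lemma steps_cons: "(perfect_step A)\<^sup>*\<^sup>* X Y \<Longrightarrow> cons_rel n A X Y"
proof (induction rule: rtranclp_induct)
  case base then show ?case unfolding cons_rel_def by blast
next
  case (step y z) then show ?case using step_cons cons_trans by blast
qed

lemma eq_sub:
  assumes "is_clustering n B" "is_clustering n B'"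
    "\<forall>u\<in>{1..n}. \<forall>v\<in>{1..n}. u \<noteq> v \<longrightarrow> intra B u v = intra B' u v"
  shows "B \<subseteq> B'"
proof
  fix c assume c: "c \<in> B"
  have "{} \<notin> B" using assms(1) unfolding is_clustering_def by simp
  then have "c \<noteq> {}" using c by metis
  then obtain x where x: "x \<in> c" by blast
  have xn: "x \<in> {1..n}" using cluster_sub[OF assms(1) c] x by blast
  obtain c' where c': "c' \<in> B'" "x \<in> c'" using in_cluster[OF assms(2) xn] by blast
  have "c \<subseteq> c'"
  proof
    fix y assume y: "y \<in> c"
    show "y \<in> c'"
    proof (cases "y = x")
      case False
      have yn: "y \<in> {1..n}" using cluster_sub[OF assms(1) c] y by blast
      have "intra B x y" using c x y unfolding intra_def by blast
      moreover have "intra B x y = intra B' x y" using assms(3) xn yn False by simp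
      ultimately have "intra B' x y" by simp
      then obtain d where d: "d \<in> B'" "x \<in> d" "y \<in> d" unfolding intra_def by blast
      have "d = c'" using cluster_unique[OF assms(2) d(1) c'(1) d(2) c'(2)] .
      then show ?thesis using d(3) by simp
    qed (use c' in auto)
  qed
  moreover have "c' \<subseteq> c"
  proof
    fix y assume y: "y \<in> c'"
    show "y \<in> c"
    proof (cases "y = x")
      case False
      have yn: "y \<in> {1..n}" using cluster_sub[OF assms(2) c'(1)] y by blast
      have "intra B' x y" using c' y unfolding intra_def by blast
      moreover have "intra B x y = intra B' x y" using assms(3) xn yn False by simp
      ultimately have "intra B x y" by simp
      then obtain d where d: "d \<in> B" "x \<in> d" "y \<in> d" unfolding intra_def by blast
      have "d = c" using cluster_unique[OF assms(1) d(1) c d(2) x] .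
      then show ?thesis using d(3) by simp
    qed (use x in auto)
  qed
  ultimately show "c \<in> B'" using c' by auto
qed

lemma eq_if_nodiff:
  assumes "is_clustering n B" "is_clustering n B'" "diffset n B B' = {}"
  shows "B = B'"
proof -
  have h: "\<forall>u\<in>{1..n}. \<forall>v\<in>{1..n}. u \<noteq> v \<longrightarrow> intra B u v = intra B' u v"
    using assms(3) unfolding diffset_def by blast
  have h': "\<forall>u\<in>{1..n}. \<forall>v\<in>{1..n}. u \<noteq> v \<longrightarrow> intra B' u v = intra B u v"
    using h by simp
  show ?thesis using eq_sub[OF assms(1,2) h] eq_sub[OF assms(2,1) h'] by (rule subset_antisym)
qed

lemma generic_progress:
  assumes cons: "cons_rel n A B B'"
    and ch: "\<forall>u\<in>{1..n}. \<forall>v\<in>{1..n}. u \<noteq> v \<longrightarrow> intra B1 u v = intra B u v \<or> intra B1 u v = intra B' u v"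
    and p: "(x,y) \<in> diffset n B B'" "intra B1 x y = intra B' x y"
  shows "cons_rel n A B1 B'" "card (diffset n B1 B') < card (diffset n B B')"
proof -
  show "cons_rel n A B1 B'" unfolding cons_rel_def
  proof (intro ballI impI)
    fix u v assume u: "u \<in> {1..n}" and v: "v \<in> {1..n}" and uv: "u \<noteq> v" and ag: "agrees A B1 u v"
    have "intra B1 u v = intra B u v \<or> intra B1 u v = intra B' u v" using ch u v uv by blast
    then show "agrees A B' u v"
    proof
      assume "intra B1 u v = intra B u v"
      then have "agrees A B u v" using ag unfolding agrees_def by simp
      then show ?thesis using cons u v uv unfolding cons_rel_def by blast
    qed (use ag in \<open>simp add: agrees_def\<close>)
  qed
  have sub: "diffset n B1 B' \<subseteq> diffset n B B' - {(x,y)}"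
  proof
    fix w assume w: "w \<in> diffset n B1 B'"
    obtain u v where wuv: "w = (u,v)" by (cases w)
    have h: "u \<in> {1..n}" "v \<in> {1..n}" "u \<noteq> v" "intra B1 u v \<noteq> intra B' u v"
      using w wuv unfolding diffset_def by auto
    then have "intra B1 u v = intra B u v" using ch by blast
    then show "w \<in> diffset n B B' - {(x,y)}" using h wuv p(2) unfolding diffset_def by auto
  qed
  have fin: "finite (diffset n B B')"
    by (rule finite_subset[of _ "{1..n} \<times> {1..n}"]) (auto simp: diffset_def)
  have "card (diffset n B1 B') \<le> card (diffset n B B' - {(x,y)})"
    using sub fin by (intro card_mono) auto
  also have "\<dots> < card (diffset n B B')" using fin p(1) by (rule card_Diff1_less)
  finally show "card (diffset n B1 B') < card (diffset n B B')" .
qed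


lemma intra_refl: "is_clustering n C \<Longrightarrow> x \<in> {1..n} \<Longrightarrow> intra C x x"
  unfolding intra_def using in_cluster by blast

lemma intra_sym: "intra C x y \<Longrightarrow> intra C y x"
  unfolding intra_def by blast

lemma split_clustering:
  assumes cl: "is_clustering n B" and b: "b \<in> B" and P: "P \<noteq> {}" and Q: "Q \<noteq> {}"
    and PQ: "P \<inter> Q = {}" and PQb: "P \<union> Q = b"
  shows "is_clustering n ((B - {b}) \<union> {P, Q})"
proof -
  have U: "\<Union>B = {1..n}" and E: "{} \<notin> B" and D: "\<And>c d. c \<in> B \<Longrightarrow> d \<in> B \<Longrightarrow> c \<noteq> d \<Longrightarrow> c \<inter> d = {}"
    using cl unfolding is_clustering_def by auto
  have "\<Union>((B - {b}) \<union> {P, Q}) = \<Union>(B - {b}) \<union> b" using PQb by auto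
  also have "\<dots> = \<Union>B" using b by auto
  finally have U1: "\<Union>((B - {b}) \<union> {P, Q}) = {1..n}" using U by simp
  have E1: "{} \<notin> (B - {b}) \<union> {P, Q}" using E P Q by auto
  have Pb: "P \<subseteq> b" "Q \<subseteq> b" using PQb by auto
  have D1: "c \<inter> d = {}" if c: "c \<in> (B - {b}) \<union> {P, Q}" and d: "d \<in> (B - {b}) \<union> {P, Q}" and cd: "c \<noteq> d" for c d
  proof -
    have c': "(c \<in> B \<and> c \<noteq> b) \<or> c = P \<or> c = Q" using c by auto
    have d': "(d \<in> B \<and> d \<noteq> b) \<or> d = P \<or> d = Q" using d by auto
    have cb: "c \<inter> b = {}" if "c \<in> B" "c \<noteq> b" for c using D[OF that(1) b that(2)] .
    show ?thesis
    proof (cases "c \<in> B \<and> c \<noteq> b")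
      case True
      show ?thesis
      proof (cases "d \<in> B \<and> d \<noteq> b")
        case True2: True
        then show ?thesis using True D cd by blast
      next
        case False
        then have "d \<subseteq> b" using d' Pb by auto
        then show ?thesis using cb True by blast
      qed
    next
      case False
      then have cc: "c = P \<or> c = Q" using c' by blast
      then have "c \<subseteq> b" using Pb by auto
      show ?thesis
      proof (cases "d \<in> B \<and> d \<noteq> b")
        case True
        then show ?thesis using cb \<open>c \<subseteq> b\<close> by blast
      next
        case False
        then have "d = P \<or> d = Q" using d' by blast
        then show ?thesis using cc cd PQ by auto
      qed
    qed
  qed
  show ?thesis unfolding is_clustering_def using U1 E1 D1 by (intro conjI) (simp, simp, metis)
qed

lemma merge_clustering:
  assumes cl: "is_clustering n B" and b: "b1 \<in> B" "b2 \<in> B"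
  shows "is_clustering n ((B - {b1, b2}) \<union> {b1 \<union> b2})"
proof -
  have U: "\<Union>B = {1..n}" and E: "{} \<notin> B" and D: "\<And>c d. c \<in> B \<Longrightarrow> d \<in> B \<Longrightarrow> c \<noteq> d \<Longrightarrow> c \<inter> d = {}"
    using cl unfolding is_clustering_def by auto
  have "\<Union>((B - {b1, b2}) \<union> {b1 \<union> b2}) = \<Union>B" using b by auto
  then have U1: "\<Union>((B - {b1, b2}) \<union> {b1 \<union> b2}) = {1..n}" using U by simp
  have E1: "{} \<notin> (B - {b1, b2}) \<union> {b1 \<union> b2}" using E b by auto
  have D1: "c \<inter> d = {}" if c: "c \<in> (B - {b1, b2}) \<union> {b1 \<union> b2}" and d: "d \<in> (B - {b1, b2}) \<union> {b1 \<union> b2}" and cd: "c \<noteq> d" for c d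
  proof -
    have c': "(c \<in> B \<and> c \<noteq> b1 \<and> c \<noteq> b2) \<or> c = b1 \<union> b2" using c by auto
    have d': "(d \<in> B \<and> d \<noteq> b1 \<and> d \<noteq> b2) \<or> d = b1 \<union> b2" using d by auto
    show ?thesis
    proof (cases "c = b1 \<union> b2")
      case True
      then have "d \<in> B \<and> d \<noteq> b1 \<and> d \<noteq> b2" using d' cd by auto
      then have "d \<inter> b1 = {}" "d \<inter> b2 = {}" using D[of d b1] D[of d b2] b by auto
      then show ?thesis using True by blast
    next
      case False
      then have cB: "c \<in> B \<and> c \<noteq> b1 \<and> c \<noteq> b2" using c' by auto
      show ?thesis
      proof (cases "d = b1 \<union> b2")
        case True
        have "c \<inter> b1 = {}" "c \<inter> b2 = {}" using D[of c b1] D[of c b2] b cB by auto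
        then show ?thesis using True by blast
      next
        case False
        then have "d \<in> B" using d' by auto
        then show ?thesis using D cB cd by blast
      qed
    qed
  qed
  show ?thesis unfolding is_clustering_def using U1 E1 D1 by (intro conjI) (simp, simp, metis)
qed


lemma split_progress:
  assumes clA: "is_clustering n A" and clB: "is_clustering n B" and clB': "is_clustering n B'"
    and cons: "cons_rel n A B B'"
    and xn: "x \<in> {1..n}" and yn: "y \<in> {1..n}" and xy: "x \<noteq> y"
    and iB: "intra B x y" and niB': "\<not> intra B' x y"
  shows "\<exists>B1. perfect_step A B B1 \<and> is_clustering n B1 \<and> cons_rel n A B1 B'
           \<and> card (diffset n B1 B') < card (diffset n B B')"
proof -
  obtain b where b: "b \<in> B" "x \<in> b" "y \<in> b" using iB unfolding intra_def by blast
  obtain b' where b': "b' \<in> B'" "x \<in> b'" using in_cluster[OF clB' xn] by blast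
  have ynb': "y \<notin> b'" using b' niB' unfolding intra_def by blast
  define P where "P = b \<inter> b'"
  define Q where "Q = b - b'"
  define B1 where "B1 = (B - {b}) \<union> {P, Q}"
  have P: "P \<noteq> {}" using b b' P_def by blast
  have Q: "Q \<noteq> {}" using b ynb' Q_def by blast
  have PQ: "P \<inter> Q = {}" "P \<union> Q = b" unfolding P_def Q_def by auto
  have bsub: "b \<subseteq> {1..n}" using cluster_sub[OF clB b(1)] .
  have perf: "\<forall>Ai\<in>A. Ai \<inter> b \<subseteq> P \<or> Ai \<inter> b \<subseteq> Q"
  proof
    fix Ai assume Ai: "Ai \<in> A"
    show "Ai \<inter> b \<subseteq> P \<or> Ai \<inter> b \<subseteq> Q"
    proof (rule ccontr)
      assume "\<not> ?thesis"
      then obtain u v where u: "u \<in> Ai" "u \<in> b" "u \<notin> b'" and v: "v \<in> Ai" "v \<in> b" "v \<in> b'"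
        unfolding P_def Q_def by blast
      have uv: "u \<noteq> v" using u v by blast
      have un: "u \<in> {1..n}" "v \<in> {1..n}" using u v bsub by auto
      have "agrees A B u v" unfolding agrees_def intra_def using u v Ai b(1) by blast
      then have "agrees A B' u v" using cons un uv unfolding cons_rel_def by blast
      moreover have "intra A u v" unfolding intra_def using u v Ai by blast
      ultimately have "intra B' u v" unfolding agrees_def by simp
      then obtain d where d: "d \<in> B'" "u \<in> d" "v \<in> d" unfolding intra_def by blast
      have "d = b'" using cluster_unique[OF clB' d(1) b'(1) d(3) v(3)] .
      then show False using d(2) u(3) by simp
    qed
  qed
  have step: "perfect_step A B B1"
    unfolding perfect_step_def perfect_split_def
    using b(1) P Q PQ perf B1_def by blast
  have cl1: "is_clustering n B1" unfolding B1_def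
    using split_clustering[OF clB b(1) P Q PQ] .
  have mem: "c \<in> B1 \<longleftrightarrow> (c \<in> B \<and> c \<noteq> b) \<or> c = P \<or> c = Q" for c
    unfolding B1_def by auto
  have ch: "\<forall>u\<in>{1..n}. \<forall>v\<in>{1..n}. u \<noteq> v \<longrightarrow> intra B1 u v = intra B u v \<or> intra B1 u v = intra B' u v"
  proof (intro ballI impI)
    fix u v assume un: "u \<in> {1..n}" "v \<in> {1..n}" "u \<noteq> v"
    have sub1: "intra B u v" if h1: "intra B1 u v"
    proof -
      obtain c where c: "c \<in> B1" "u \<in> c" "v \<in> c" using h1 unfolding intra_def by blast
      have "c \<in> B \<or> c \<subseteq> b" using c(1) mem PQ(2) by blast
      then show ?thesis using c b(1) unfolding intra_def by blast
    qed
    show "intra B1 u v = intra B u v \<or> intra B1 u v = intra B' u v"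
    proof (cases "intra B1 u v = intra B u v")
      case False
      then have iBu: "intra B u v" and ni1: "\<not> intra B1 u v" using sub1 by blast+
      obtain c where c: "c \<in> B" "u \<in> c" "v \<in> c" using iBu unfolding intra_def by blast
      have cb: "c = b"
      proof (rule ccontr)
        assume "c \<noteq> b"
        then have "c \<in> B1" using mem c(1) by blast
        then show False using ni1 c unfolding intra_def by blast
      qed
      have "\<not> (u \<in> P \<and> v \<in> P)" "\<not> (u \<in> Q \<and> v \<in> Q)"
        using ni1 mem unfolding intra_def by blast+
      then have cross: "(u \<in> b' \<and> v \<notin> b') \<or> (u \<notin> b' \<and> v \<in> b')"
        using c cb unfolding P_def Q_def by blast
      have "\<not> intra B' u v"
      proof
        assume "intra B' u v"
        then obtain d where d: "d \<in> B'" "u \<in> d" "v \<in> d" unfolding intra_def by blast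
        show False
        proof (cases "u \<in> b'")
          case True
          then have "d = b'" using cluster_unique[OF clB' d(1) b'(1) d(2)] by simp
          then show False using cross True d(3) by simp
        next
          case False
          then have "v \<in> b'" using cross by blast
          then have "d = b'" using cluster_unique[OF clB' d(1) b'(1) d(3)] by simp
          then show False using False d(2) by simp
        qed
      qed
      then show ?thesis using ni1 by simp
    qed simp
  qed
  have ni1: "\<not> intra B1 x y"
  proof
    assume "intra B1 x y"
    then obtain c where c: "c \<in> B1" "x \<in> c" "y \<in> c" unfolding intra_def by blast
    have "c \<in> B \<and> c \<noteq> b \<or> c = P \<or> c = Q" using c(1) mem by blast
    moreover have "\<not> (c \<in> B \<and> c \<noteq> b)" using cluster_unique[OF clB _ b(1) c(2) b(2)] by blast
    ultimately show False using c b' ynb' unfolding P_def Q_def by blast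
  qed
  have pd: "(x,y) \<in> diffset n B B'" unfolding diffset_def using xn yn xy iB niB' by simp
  have "intra B1 x y = intra B' x y" using ni1 niB' by simp
  from generic_progress[OF cons ch pd this] step cl1 show ?thesis by blast
qed


lemma merge_progress:
  assumes clA: "is_clustering n A" and clB: "is_clustering n B" and clB': "is_clustering n B'"
    and cons: "cons_rel n A B B'"
    and noT1: "\<forall>u\<in>{1..n}. \<forall>v\<in>{1..n}. u \<noteq> v \<longrightarrow> intra B u v \<longrightarrow> intra B' u v"
    and xn: "x \<in> {1..n}" and yn: "y \<in> {1..n}" and xy: "x \<noteq> y"
    and niB: "\<not> intra B x y" and iB': "intra B' x y"
  shows "\<exists>B1. perfect_step A B B1 \<and> is_clustering n B1 \<and> cons_rel n A B1 B'
           \<and> card (diffset n B1 B') < card (diffset n B B')"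
proof -
  have refines: "intra B' u v" if "intra B u v" "u \<in> {1..n}" "v \<in> {1..n}" for u v
  proof (cases "u = v")
    case True then show ?thesis using intra_refl[OF clB'] that(2) by simp
  next
    case False then show ?thesis using noT1 that by blast
  qed
  obtain b1 where b1: "b1 \<in> B" "x \<in> b1" using in_cluster[OF clB xn] by blast
  obtain b2 where b2: "b2 \<in> B" "y \<in> b2" using in_cluster[OF clB yn] by blast
  have b12: "b1 \<noteq> b2" using b1 b2 niB unfolding intra_def by blast
  have b1n: "b1 \<subseteq> {1..n}" using cluster_sub[OF clB b1(1)] .
  have b2n: "b2 \<subseteq> {1..n}" using cluster_sub[OF clB b2(1)] .
  have disj: "b1 \<inter> b2 = {}" using clB b1(1) b2(1) b12 unfolding is_clustering_def by blast
  have crossB': "intra B' u v" if u: "u \<in> b1" and v: "v \<in> b2" for u v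
  proof -
    have "intra B u x" unfolding intra_def using u b1 by blast
    then have 1: "intra B' u x" using refines u b1n xn by blast
    have "intra B y v" unfolding intra_def using v b2 by blast
    then have 2: "intra B' y v" using refines v b2n yn by blast
    show ?thesis using intra_trans[OF clB' intra_trans[OF clB' 1 iB'] 2] .
  qed
  have crossnB: "\<not> intra B u v" if u: "u \<in> b1" and v: "v \<in> b2" for u v
  proof
    assume "intra B u v"
    then obtain c where c: "c \<in> B" "u \<in> c" "v \<in> c" unfolding intra_def by blast
    have "c = b1" using cluster_unique[OF clB c(1) b1(1) c(2) u] .
    moreover have "c = b2" using cluster_unique[OF clB c(1) b2(1) c(3) v] .
    ultimately show False using b12 by simp
  qed
  have crossA: "intra A u v" if u: "u \<in> b1" and v: "v \<in> b2" for u v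
  proof (rule ccontr)
    assume nA: "\<not> intra A u v"
    have uv: "u \<noteq> v" using u v disj by blast
    have un: "u \<in> {1..n}" "v \<in> {1..n}" using u v b1n b2n by auto
    have "agrees A B u v" using nA crossnB[OF u v] unfolding agrees_def by simp
    then have "agrees A B' u v" using cons un uv unfolding cons_rel_def by blast
    then show False using nA crossB'[OF u v] unfolding agrees_def by simp
  qed
  obtain Ai where Ai: "Ai \<in> A" "x \<in> Ai" using in_cluster[OF clA xn] by blast
  have b2A: "b2 \<subseteq> Ai"
  proof
    fix v assume v: "v \<in> b2"
    obtain d where d: "d \<in> A" "x \<in> d" "v \<in> d" using crossA[OF b1(2) v] unfolding intra_def by blast
    have "d = Ai" using cluster_unique[OF clA d(1) Ai(1) d(2) Ai(2)] .
    then show "v \<in> Ai" using d(3) by simp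
  qed
  have b1A: "b1 \<subseteq> Ai"
  proof
    fix u assume u: "u \<in> b1"
    obtain d where d: "d \<in> A" "u \<in> d" "y \<in> d" using crossA[OF u b2(2)] unfolding intra_def by blast
    have "y \<in> Ai" using b2A b2(2) by blast
    then have "d = Ai" using cluster_unique[OF clA d(1) Ai(1) d(3)] by simp
    then show "u \<in> Ai" using d(2) by simp
  qed
  define B1 where "B1 = (B - {b1, b2}) \<union> {b1 \<union> b2}"
  have step: "perfect_step A B B1"
    unfolding perfect_step_def perfect_merge_def
    using Ai(1) b1(1) b2(1) b12 b1A b2A B1_def by blast
  have cl1: "is_clustering n B1" unfolding B1_def
    using merge_clustering[OF clB b1(1) b2(1)] .
  have mem: "c \<in> B1 \<longleftrightarrow> (c \<in> B \<and> c \<noteq> b1 \<and> c \<noteq> b2) \<or> c = b1 \<union> b2" for c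
    unfolding B1_def by auto
  have ch: "\<forall>u\<in>{1..n}. \<forall>v\<in>{1..n}. u \<noteq> v \<longrightarrow> intra B1 u v = intra B u v \<or> intra B1 u v = intra B' u v"
  proof (intro ballI impI)
    fix u v assume un: "u \<in> {1..n}" "v \<in> {1..n}" "u \<noteq> v"
    have sup1: "intra B1 u v" if h1: "intra B u v"
    proof -
      obtain c where c: "c \<in> B" "u \<in> c" "v \<in> c" using h1 unfolding intra_def by blast
      show ?thesis
      proof (cases "c = b1 \<or> c = b2")
        case True
        then have "u \<in> b1 \<union> b2" "v \<in> b1 \<union> b2" using c by auto
        moreover have "b1 \<union> b2 \<in> B1" using mem by simp
        ultimately show ?thesis unfolding intra_def by (intro bexI[of _ "b1 \<union> b2"]) simp_all
      next
        case False then have "c \<in> B1" using mem c(1) by blast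
        then show ?thesis using c unfolding intra_def by blast
      qed
    qed
    show "intra B1 u v = intra B u v \<or> intra B1 u v = intra B' u v"
    proof (cases "intra B1 u v = intra B u v")
      case False
      then have i1: "intra B1 u v" and nB: "\<not> intra B u v" using sup1 by blast+
      obtain c where c: "c \<in> B1" "u \<in> c" "v \<in> c" using i1 unfolding intra_def by blast
      have "c = b1 \<union> b2"
      proof (rule ccontr)
        assume "c \<noteq> b1 \<union> b2"
        then have "c \<in> B" using mem c(1) by blast
        then show False using nB c unfolding intra_def by blast
      qed
      then have uv: "u \<in> b1 \<union> b2" "v \<in> b1 \<union> b2" using c by auto
      have n1: "\<not> (u \<in> b1 \<and> v \<in> b1)" using nB b1(1) unfolding intra_def by blast
      have n2: "\<not> (u \<in> b2 \<and> v \<in> b2)" using nB b2(1) unfolding intra_def by blast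
      have "(u \<in> b1 \<and> v \<in> b2) \<or> (u \<in> b2 \<and> v \<in> b1)" using uv n1 n2 by blast
      then have "intra B' u v" using crossB' intra_sym by blast
      then show ?thesis using i1 by simp
    qed simp
  qed
  have i1: "intra B1 x y"
  proof -
    have "x \<in> b1 \<union> b2" "y \<in> b1 \<union> b2" using b1 b2 by auto
    moreover have "b1 \<union> b2 \<in> B1" using mem by simp
    ultimately show ?thesis unfolding intra_def by (intro bexI[of _ "b1 \<union> b2"]) simp_all
  qed
  have pd: "(x,y) \<in> diffset n B B'" unfolding diffset_def using xn yn xy niB iB' by simp
  have "intra B1 x y = intra B' x y" using i1 iB' by simp
  from generic_progress[OF cons ch pd this] step cl1 show ?thesis by blast
qed


lemma main_induct:
  assumes clA: "is_clustering n A" and clB': "is_clustering n B'"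
  shows "\<forall>B. is_clustering n B \<longrightarrow> cons_rel n A B B' \<longrightarrow> card (diffset n B B') = k
           \<longrightarrow> (perfect_step A)\<^sup>*\<^sup>* B B'"
proof (induction k rule: less_induct)
  case (less k)
  show ?case
  proof (intro allI impI)
    fix B assume clB: "is_clustering n B" and cons: "cons_rel n A B B'"
      and k: "card (diffset n B B') = k"
    have IH: "(perfect_step A)\<^sup>*\<^sup>* B B'"
      if ex: "\<exists>B1. perfect_step A B B1 \<and> is_clustering n B1 \<and> cons_rel n A B1 B'
           \<and> card (diffset n B1 B') < card (diffset n B B')"
    proof -
      obtain B1 where B1: "perfect_step A B B1" "is_clustering n B1" "cons_rel n A B1 B'"
        "card (diffset n B1 B') < card (diffset n B B')" using ex by blast
      have "(perfect_step A)\<^sup>*\<^sup>* B1 B'" using less.IH[of "card (diffset n B1 B')"] B1 k by blast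
      then show ?thesis using B1(1) by (metis converse_rtranclp_into_rtranclp)
    qed
    show "(perfect_step A)\<^sup>*\<^sup>* B B'"
    proof (cases "diffset n B B' = {}")
      case True
      then have "B = B'" using eq_if_nodiff[OF clB clB'] by simp
      then show ?thesis by simp
    next
      case False
      then obtain x y where xy: "(x,y) \<in> diffset n B B'" by auto
      then have xyp: "x \<in> {1..n}" "y \<in> {1..n}" "x \<noteq> y" "intra B x y \<noteq> intra B' x y"
        unfolding diffset_def by auto
      show ?thesis
      proof (cases "\<exists>u\<in>{1..n}. \<exists>v\<in>{1..n}. u \<noteq> v \<and> intra B u v \<and> \<not> intra B' u v")
        case True
        then obtain u v where uv: "u \<in> {1..n}" "v \<in> {1..n}" "u \<noteq> v" "intra B u v" "\<not> intra B' u v"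
          by blast
        show ?thesis by (rule IH, rule split_progress[OF clA clB clB' cons uv])
      next
        case False
        then have noT1: "\<forall>u\<in>{1..n}. \<forall>v\<in>{1..n}. u \<noteq> v \<longrightarrow> intra B u v \<longrightarrow> intra B' u v"
          by blast
        have "\<not> intra B x y" "intra B' x y" using noT1 xyp by blast+
        then show ?thesis
          by (intro IH merge_progress[OF clA clB clB' cons noT1 xyp(1,2,3)])
      qed
    qed
  qed
qed

theorem theorem2:
  fixes n :: nat and A B B' :: "nat set set"
  assumes "is_clustering n A" and "is_clustering n B" and "is_clustering n B'"
  shows "consistent_improvement n A B B' \<longleftrightarrow>
           B' \<noteq> B \<and> (perfect_step A)\<^sup>*\<^sup>* B B'"
proof
  assume ci: "consistent_improvement n A B B'"
  then have ne: "B \<noteq> B'" and cons: "cons_rel n A B B'"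
    unfolding consistent_improvement_def cons_rel_def by auto
  have "(perfect_step A)\<^sup>*\<^sup>* B B'"
    using main_induct[OF assms(1,3)] assms(2) cons by blast
  then show "B' \<noteq> B \<and> (perfect_step A)\<^sup>*\<^sup>* B B'" using ne by simp
next
  assume h: "B' \<noteq> B \<and> (perfect_step A)\<^sup>*\<^sup>* B B'"
  then have "cons_rel n A B B'" using steps_cons by blast
  then show "consistent_improvement n A B B'"
    using h unfolding consistent_improvement_def cons_rel_def by auto
qed

end
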